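(* Let $P:\mathcal{C}^{\mathrm{op}}\to\mathbf{Pos}$ be a Gödel doctrine. Then for all objects $I,U,X,V,Y$ of $\mathcal{C}$ and all quantifier-free predicates $\psi_D\in P(I\times U\times X)$ and $\phi_D\in P(I\times V\times Y)$ we have \[ i:I\;|\;\exists u.\forall x.\,\psi_D(i,u,x)\vdash\exists v.\forall y.\,\phi_D(i,v,y)\] if and only if there exist arrows $f_0:I\times U\to V$ and $f_1:I\times U\times Y\to X$ of $\mathcal{C}$ such that \[ u:U,y:Y,i:I\;|\;\psi_D(i,u,f_1(i,u,y))\vdash\phi_D(i,f_0(i,u),y).\]
   Context: A doctrine is a functor $P:\mathcal{C}^{\mathrm{op}}\to\mathbf{Pos}$ where $\mathcal{C}$ has finite products; $P_f$ denotes reindexing along $f$. $P$ is existential (resp. universal) if for every product projection $\pi_i:A_1\times A_2\to A_i$ the map $P_{\pi_i}$ has a left adjoint $\exists_{\pi_i}$ (resp. right adjoint $\forall_{\pi_i}$) satisfying Beck–Chevalley: for every pullback of a projection $\pi:X\to A$ along $f:A'\to A$, with projection $\pi':X'\to A'$ and $f':X'\to X$, $\exists_{\pi'}P_{f'}\beta=P_f\exists_\pi\beta$ (resp. $\forall_{\pi'}P_{f'}\beta=P_f\forall_\pi\beta$). Notation: $a_1:A_1,\dots,a_n:A_n\;|\;\phi\vdash\psi$ means $\phi\le\psi$ in $P(A_1\times\dots\times A_n)$; $\exists b.\psi(a,b)$, $\forall b.\psi(a,b)$ denote $\exists_{\pi_A}\psi$, $\forall_{\pi_A}\psi$; substitution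 of terms (arrows) is reindexing. In an existential doctrine, $\alpha\in P(A)$ is an existential splitting if for every $B$ and $\beta\in P(A\times B)$ with $\alpha\le\exists_{\pi_A}\beta$ there is $g:A\to B$ with $\alpha\le P_{\langle1_A,g\rangle}\beta$; $\alpha\in P(I)$ is existential-free if $P_f\alpha$ is an existential splitting for all $f:A\to I$. In a universal doctrine $Q$, $\alpha\in Q(A)$ is a universal splitting if for every $B$ and $\beta\in Q(A\times B)$ with $\forall_{\pi_A}\beta\le\alpha$ there is $g:A\to B$ with $Q_{\langle1_A,g\rangle}\beta\le\alpha$; $\alpha\in Q(I)$ is universal-free if $Q_f\alpha$ is a universal splitting for all $f:A\to I$. Enough existential-free (resp. universal-free) predicates: every $\alpha\in P(I)$ equals $\exists_{\pi_I}\beta$ (resp. $\forall_{\pi_I}\beta$) for some object $A$ and existential-free (resp. universal-free) $\beta\in P(I\times A)$. A Gödel doctrine is a doctrine $P$ such that: (1) $\mathcal{C}$ is cartesian closed; (2) $P$ is existential and universal; (3) $P$ has enough existential-free predicates; (4) if $\alpha$ is existential-free then $\forall_\pi\alpha$ is existential-free for every projection $\pi$; (5) the sub-doctrine $P'$ of existential-free predicates (universal by (4)) has enough universal-free predicates. A predicate is quantifier-free if it is existential-free in $P$ and universal-free in $P'$. *)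

theory Defs
  imports Main
begin

text \<open>A doctrine P : C^op -> Pos over a category C with chosen finite products,
  presented by explicit data: objects/arrows of C, composition, identities,
  chosen binary products, the posets P(A) (as carrier sets with an order indexed
  by the object), reindexing, and quantifiers along the two chosen product
  projections.\<close>

record ('o, 'a, 'p) doctrine =
  Ob   :: "'o set"
  Ar   :: "'a set"
  dm   :: "'a \<Rightarrow> 'o"
  cd   :: "'a \<Rightarrow> 'o"
  cmp  :: "'a \<Rightarrow> 'a \<Rightarrow> 'a"    (* cmp g f = g o f *)
  idt  :: "'o \<Rightarrow> 'a"
  prd  :: "'o \<Rightarrow> 'o \<Rightarrow> 'o"
  pr1  :: "'o \<Rightarrow> 'o \<Rightarrow> 'a"
  pr2  :: "'o \<Rightarrow> 'o \<Rightarrow> 'a"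
  pair :: "'a \<Rightarrow> 'a \<Rightarrow> 'a"
  Pr   :: "'o \<Rightarrow> 'p set"
  le   :: "'o \<Rightarrow> 'p \<Rightarrow> 'p \<Rightarrow> bool"
  rdx  :: "'a \<Rightarrow> 'p \<Rightarrow> 'p"
  ex1  :: "'o \<Rightarrow> 'o \<Rightarrow> 'p \<Rightarrow> 'p"   (* along pr1 A B : A x B -> A *)
  ex2  :: "'o \<Rightarrow> 'o \<Rightarrow> 'p \<Rightarrow> 'p"   (* along pr2 A B : A x B -> B *)
  all1 :: "'o \<Rightarrow> 'o \<Rightarrow> 'p \<Rightarrow> 'p"
  all2 :: "'o \<Rightarrow> 'o \<Rightarrow> 'p \<Rightarrow> 'p"

definition hom :: "('o, 'a, 'p) doctrine \<Rightarrow> 'o \<Rightarrow> 'o \<Rightarrow> 'a set" where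
  "hom D A B = {f \<in> Ar D. dm D f = A \<and> cd D f = B}"

definition is_category :: "('o, 'a, 'p) doctrine \<Rightarrow> bool" where
  "is_category D \<longleftrightarrow>
     (\<forall>f\<in>Ar D. dm D f \<in> Ob D \<and> cd D f \<in> Ob D) \<and>
     (\<forall>A\<in>Ob D. idt D A \<in> hom D A A) \<and>
     (\<forall>f\<in>Ar D. \<forall>g\<in>Ar D. cd D f = dm D g \<longrightarrow> cmp D g f \<in> hom D (dm D f) (cd D g)) \<and>
     (\<forall>f\<in>Ar D. cmp D f (idt D (dm D f)) = f \<and> cmp D (idt D (cd D f)) f = f) \<and>
     (\<forall>f\<in>Ar D. \<forall>g\<in>Ar D. \<forall>h\<in>Ar D. cd D f = dm D g \<longrightarrow> cd D g = dm D h \<longrightarrow>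
        cmp D h (cmp D g f) = cmp D (cmp D h g) f)"

definition has_finite_products :: "('o, 'a, 'p) doctrine \<Rightarrow> bool" where
  "has_finite_products D \<longleftrightarrow>
     (\<exists>T\<in>Ob D. \<forall>A\<in>Ob D. \<exists>!t. t \<in> hom D A T) \<and>
     (\<forall>A\<in>Ob D. \<forall>B\<in>Ob D.
        prd D A B \<in> Ob D \<and> pr1 D A B \<in> hom D (prd D A B) A \<and> pr2 D A B \<in> hom D (prd D A B) B \<and>
        (\<forall>C\<in>Ob D. \<forall>f\<in>hom D C A. \<forall>g\<in>hom D C B.
           pair D f g \<in> hom D C (prd D A B) \<and>
           cmp D (pr1 D A B) (pair D f g) = f \<and> cmp D (pr2 D A B) (pair D f g) = g \<and>
           (\<forall>h\<in>hom D C (prd D A B). cmp D (pr1 D A B) h = f \<and> cmp D (pr2 D A B) h = g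
              \<longrightarrow> h = pair D f g)))"

definition times :: "('o, 'a, 'p) doctrine \<Rightarrow> 'a \<Rightarrow> 'a \<Rightarrow> 'a" where
  "times D f g = pair D (cmp D f (pr1 D (dm D f) (dm D g))) (cmp D g (pr2 D (dm D f) (dm D g)))"

definition cartesian_closed :: "('o, 'a, 'p) doctrine \<Rightarrow> bool" where
  "cartesian_closed D \<longleftrightarrow>
     (\<forall>A\<in>Ob D. \<forall>B\<in>Ob D. \<exists>E\<in>Ob D. \<exists>e\<in>hom D (prd D E A) B.
        \<forall>C\<in>Ob D. \<forall>f\<in>hom D (prd D C A) B.
          \<exists>!h. h \<in> hom D C E \<and> cmp D e (times D h (idt D A)) = f)"

definition is_doctrine :: "('o, 'a, 'p) doctrine \<Rightarrow> bool" where
  "is_doctrine D \<longleftrightarrow>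
     is_category D \<and> has_finite_products D \<and>
     (\<forall>A\<in>Ob D.
        (\<forall>x\<in>Pr D A. le D A x x) \<and>
        (\<forall>x\<in>Pr D A. \<forall>y\<in>Pr D A. \<forall>z\<in>Pr D A. le D A x y \<longrightarrow> le D A y z \<longrightarrow> le D A x z) \<and>
        (\<forall>x\<in>Pr D A. \<forall>y\<in>Pr D A. le D A x y \<longrightarrow> le D A y x \<longrightarrow> x = y)) \<and>
     (\<forall>A\<in>Ob D. \<forall>B\<in>Ob D. \<forall>f\<in>hom D A B. \<forall>x\<in>Pr D B.
        rdx D f x \<in> Pr D A \<and> (\<forall>y\<in>Pr D B. le D B x y \<longrightarrow> le D A (rdx D f x) (rdx D f y))) \<and>
     (\<forall>A\<in>Ob D. \<forall>x\<in>Pr D A. rdx D (idt D A) x = x) \<and>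
     (\<forall>f\<in>Ar D. \<forall>g\<in>Ar D. cd D f = dm D g \<longrightarrow>
        (\<forall>x\<in>Pr D (cd D g). rdx D (cmp D g f) x = rdx D f (rdx D g x)))"

definition existential :: "('o, 'a, 'p) doctrine \<Rightarrow> bool" where
  "existential D \<longleftrightarrow>
     (\<forall>A\<in>Ob D. \<forall>B\<in>Ob D.
        (\<forall>\<beta>\<in>Pr D (prd D A B). ex1 D A B \<beta> \<in> Pr D A \<and> ex2 D A B \<beta> \<in> Pr D B) \<and>
        (\<forall>\<beta>\<in>Pr D (prd D A B). \<forall>\<alpha>\<in>Pr D A.
           le D A (ex1 D A B \<beta>) \<alpha> \<longleftrightarrow> le D (prd D A B) \<beta> (rdx D (pr1 D A B) \<alpha>)) \<and>
        (\<forall>\<beta>\<in>Pr D (prd D A B). \<forall>\<alpha>\<in>Pr D B.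
           le D B (ex2 D A B \<beta>) \<alpha> \<longleftrightarrow> le D (prd D A B) \<beta> (rdx D (pr2 D A B) \<alpha>)) \<and>
        (\<forall>A'\<in>Ob D. \<forall>f\<in>hom D A' A. \<forall>\<beta>\<in>Pr D (prd D A B).
           ex1 D A' B (rdx D (times D f (idt D B)) \<beta>) = rdx D f (ex1 D A B \<beta>)) \<and>
        (\<forall>B'\<in>Ob D. \<forall>g\<in>hom D B' B. \<forall>\<beta>\<in>Pr D (prd D A B).
           ex2 D A B' (rdx D (times D (idt D A) g) \<beta>) = rdx D g (ex2 D A B \<beta>)))"

definition universal :: "('o, 'a, 'p) doctrine \<Rightarrow> bool" where
  "universal D \<longleftrightarrow>
     (\<forall>A\<in>Ob D. \<forall>B\<in>Ob D.
        (\<forall>\<beta>\<in>Pr D (prd D A B). all1 D A B \<beta> \<in> Pr D A \<and> all2 D A B \<beta> \<in> Pr D B) \<and>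
        (\<forall>\<beta>\<in>Pr D (prd D A B). \<forall>\<alpha>\<in>Pr D A.
           le D (prd D A B) (rdx D (pr1 D A B) \<alpha>) \<beta> \<longleftrightarrow> le D A \<alpha> (all1 D A B \<beta>)) \<and>
        (\<forall>\<beta>\<in>Pr D (prd D A B). \<forall>\<alpha>\<in>Pr D B.
           le D (prd D A B) (rdx D (pr2 D A B) \<alpha>) \<beta> \<longleftrightarrow> le D B \<alpha> (all2 D A B \<beta>)) \<and>
        (\<forall>A'\<in>Ob D. \<forall>f\<in>hom D A' A. \<forall>\<beta>\<in>Pr D (prd D A B).
           all1 D A' B (rdx D (times D f (idt D B)) \<beta>) = rdx D f (all1 D A B \<beta>)) \<and>
        (\<forall>B'\<in>Ob D. \<forall>g\<in>hom D B' B. \<forall>\<beta>\<in>Pr D (prd D A B).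
           all2 D A B' (rdx D (times D (idt D A) g) \<beta>) = rdx D g (all2 D A B \<beta>)))"

definition ex_splitting :: "('o, 'a, 'p) doctrine \<Rightarrow> 'o \<Rightarrow> 'p \<Rightarrow> bool" where
  "ex_splitting D A \<alpha> \<longleftrightarrow>
     (\<forall>B\<in>Ob D. \<forall>\<beta>\<in>Pr D (prd D A B). le D A \<alpha> (ex1 D A B \<beta>) \<longrightarrow>
        (\<exists>g\<in>hom D A B. le D A \<alpha> (rdx D (pair D (idt D A) g) \<beta>)))"

definition ex_free :: "('o, 'a, 'p) doctrine \<Rightarrow> 'o \<Rightarrow> 'p \<Rightarrow> bool" where
  "ex_free D I \<alpha> \<longleftrightarrow> \<alpha> \<in> Pr D I \<and>
     (\<forall>A\<in>Ob D. \<forall>f\<in>hom D A I. ex_splitting D A (rdx D f \<alpha>))"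

definition enough_ex_free :: "('o, 'a, 'p) doctrine \<Rightarrow> bool" where
  "enough_ex_free D \<longleftrightarrow>
     (\<forall>I\<in>Ob D. \<forall>\<alpha>\<in>Pr D I. \<exists>A\<in>Ob D. \<exists>\<beta>. ex_free D (prd D I A) \<beta> \<and> \<alpha> = ex1 D I A \<beta>)"

definition forall_preserves_ex_free :: "('o, 'a, 'p) doctrine \<Rightarrow> bool" where
  "forall_preserves_ex_free D \<longleftrightarrow>
     (\<forall>A\<in>Ob D. \<forall>B\<in>Ob D. \<forall>\<alpha>. ex_free D (prd D A B) \<alpha> \<longrightarrow>
        ex_free D A (all1 D A B \<alpha>) \<and> ex_free D B (all2 D A B \<alpha>))"

text \<open>Universal splitting / universal-free in the sub-doctrine P' of existential-free predicates.\<close>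
definition univ_splitting' :: "('o, 'a, 'p) doctrine \<Rightarrow> 'o \<Rightarrow> 'p \<Rightarrow> bool" where
  "univ_splitting' D A \<alpha> \<longleftrightarrow>
     (\<forall>B\<in>Ob D. \<forall>\<beta>. ex_free D (prd D A B) \<beta> \<longrightarrow> le D A (all1 D A B \<beta>) \<alpha> \<longrightarrow>
        (\<exists>g\<in>hom D A B. le D A (rdx D (pair D (idt D A) g) \<beta>) \<alpha>))"

definition univ_free' :: "('o, 'a, 'p) doctrine \<Rightarrow> 'o \<Rightarrow> 'p \<Rightarrow> bool" where
  "univ_free' D I \<alpha> \<longleftrightarrow> ex_free D I \<alpha> \<and>
     (\<forall>A\<in>Ob D. \<forall>f\<in>hom D A I. univ_splitting' D A (rdx D f \<alpha>))"

definition enough_univ_free' :: "('o, 'a, 'p) doctrine \<Rightarrow> bool" where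
  "enough_univ_free' D \<longleftrightarrow>
     (\<forall>I\<in>Ob D. \<forall>\<alpha>. ex_free D I \<alpha> \<longrightarrow>
        (\<exists>A\<in>Ob D. \<exists>\<beta>. univ_free' D (prd D I A) \<beta> \<and> \<alpha> = all1 D I A \<beta>))"

definition quant_free :: "('o, 'a, 'p) doctrine \<Rightarrow> 'o \<Rightarrow> 'p \<Rightarrow> bool" where
  "quant_free D I \<alpha> \<longleftrightarrow> ex_free D I \<alpha> \<and> univ_free' D I \<alpha>"

definition godel_doctrine :: "('o, 'a, 'p) doctrine \<Rightarrow> bool" where
  "godel_doctrine D \<longleftrightarrow>
     is_doctrine D \<and> cartesian_closed D \<and> existential D \<and> universal D \<and>
     enough_ex_free D \<and> forall_preserves_ex_free D \<and> enough_univ_free' D"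

end

theory Submission
  imports Defs
begin

locale gd =
  fixes D :: "('o, 'a, 'p) doctrine"
  assumes doc: "is_doctrine D" and exq: "existential D" and unq: "universal D"
    and fpe: "forall_preserves_ex_free D"
begin

lemma cat: "is_category D" using doc by (simp add: is_doctrine_def)
lemma fprod: "has_finite_products D" using doc by (simp add: is_doctrine_def)

lemma homD: "f \<in> hom D A B \<Longrightarrow> f \<in> Ar D \<and> dm D f = A \<and> cd D f = B"
  by (simp add: hom_def)

lemma hom_ob: "f \<in> hom D A B \<Longrightarrow> A \<in> Ob D \<and> B \<in> Ob D"
  using cat unfolding is_category_def hom_def by auto

lemma comp_hom: "f \<in> hom D A B \<Longrightarrow> g \<in> hom D B C \<Longrightarrow> cmp D g f \<in> hom D A C"
  using cat unfolding is_category_def hom_def by auto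

lemma id_hom: "A \<in> Ob D \<Longrightarrow> idt D A \<in> hom D A A"
  using cat unfolding is_category_def by auto

lemma comp_id_r: "f \<in> hom D A B \<Longrightarrow> cmp D f (idt D A) = f"
  using cat unfolding is_category_def hom_def by auto

lemma comp_id_l: "f \<in> hom D A B \<Longrightarrow> cmp D (idt D B) f = f"
  using cat unfolding is_category_def hom_def by auto

lemma assoc: "f \<in> hom D A B \<Longrightarrow> g \<in> hom D B C \<Longrightarrow> h \<in> hom D C E \<Longrightarrow>
  cmp D h (cmp D g f) = cmp D (cmp D h g) f"
  using cat unfolding is_category_def hom_def by auto

lemma prd_ob: "A \<in> Ob D \<Longrightarrow> B \<in> Ob D \<Longrightarrow> prd D A B \<in> Ob D"
  using fprod unfolding has_finite_products_def by auto
lemma pr1_hom: "A \<in> Ob D \<Longrightarrow> B \<in> Ob D \<Longrightarrow> pr1 D A B \<in> hom D (prd D A B) A"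
  using fprod unfolding has_finite_products_def by auto
lemma pr2_hom: "A \<in> Ob D \<Longrightarrow> B \<in> Ob D \<Longrightarrow> pr2 D A B \<in> hom D (prd D A B) B"
  using fprod unfolding has_finite_products_def by auto

lemma pair_props: "f \<in> hom D C A \<Longrightarrow> g \<in> hom D C B \<Longrightarrow>
   pair D f g \<in> hom D C (prd D A B) \<and>
           cmp D (pr1 D A B) (pair D f g) = f \<and> cmp D (pr2 D A B) (pair D f g) = g \<and>
           (\<forall>h\<in>hom D C (prd D A B). cmp D (pr1 D A B) h = f \<and> cmp D (pr2 D A B) h = g
              \<longrightarrow> h = pair D f g)"
proof -
  assume f: "f \<in> hom D C A" and g: "g \<in> hom D C B"
  have ob: "A \<in> Ob D" "B \<in> Ob D" "C \<in> Ob D" using hom_ob f g by auto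
  show ?thesis using fprod ob f g unfolding has_finite_products_def by blast
qed

lemma pair_hom: "f \<in> hom D C A \<Longrightarrow> g \<in> hom D C B \<Longrightarrow> pair D f g \<in> hom D C (prd D A B)"
  using pair_props by blast
lemma pr1_pair: "f \<in> hom D C A \<Longrightarrow> g \<in> hom D C B \<Longrightarrow> cmp D (pr1 D A B) (pair D f g) = f"
  using pair_props by blast
lemma pr2_pair: "f \<in> hom D C A \<Longrightarrow> g \<in> hom D C B \<Longrightarrow> cmp D (pr2 D A B) (pair D f g) = g"
  using pair_props by blast
lemma pair_unique: "f \<in> hom D C A \<Longrightarrow> g \<in> hom D C B \<Longrightarrow> h \<in> hom D C (prd D A B) \<Longrightarrow>
   cmp D (pr1 D A B) h = f \<Longrightarrow> cmp D (pr2 D A B) h = g \<Longrightarrow> h = pair D f g"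
  using pair_props by blast

lemma pair_comp:
  assumes a: "a \<in> hom D C A" and b: "b \<in> hom D C B" and c: "c \<in> hom D E C"
  shows "cmp D (pair D a b) c = pair D (cmp D a c) (cmp D b c)"
proof -
  have ob: "A \<in> Ob D" "B \<in> Ob D" using hom_ob a b by auto
  have p: "pair D a b \<in> hom D C (prd D A B)" using pair_hom a b .
  show ?thesis
  proof (rule pair_unique[of _ E A _ B])
    show "cmp D a c \<in> hom D E A" using comp_hom c a .
    show "cmp D b c \<in> hom D E B" using comp_hom c b .
    show "cmp D (pair D a b) c \<in> hom D E (prd D A B)" using comp_hom c p .
    show "cmp D (pr1 D A B) (cmp D (pair D a b) c) = cmp D a c"
      using assoc[OF c p pr1_hom[OF ob]] pr1_pair[OF a b] by simp
    show "cmp D (pr2 D A B) (cmp D (pair D a b) c) = cmp D b c"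
      using assoc[OF c p pr2_hom[OF ob]] pr2_pair[OF a b] by simp
  qed
qed

lemma times_eq:
  assumes f: "f \<in> hom D A' A" and g: "g \<in> hom D B' B"
  shows "times D f g = pair D (cmp D f (pr1 D A' B')) (cmp D g (pr2 D A' B'))"
  using homD[OF f] homD[OF g] by (simp add: times_def)

lemma times_hom:
  assumes f: "f \<in> hom D A' A" and g: "g \<in> hom D B' B"
  shows "times D f g \<in> hom D (prd D A' B') (prd D A B)"
proof -
  have ob: "A' \<in> Ob D" "B' \<in> Ob D" using hom_ob f g by auto
  show ?thesis unfolding times_eq[OF f g]
    by (rule pair_hom; rule comp_hom; (rule pr1_hom[OF ob] | rule pr2_hom[OF ob] | rule f | rule g))
qed

lemma times_pair:
  assumes f: "f \<in> hom D A' A" and g: "g \<in> hom D B' B"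
    and a: "a \<in> hom D C A'" and b: "b \<in> hom D C B'"
  shows "cmp D (times D f g) (pair D a b) = pair D (cmp D f a) (cmp D g b)"
proof -
  have ob: "A' \<in> Ob D" "B' \<in> Ob D" using hom_ob f g by auto
  have p: "pair D a b \<in> hom D C (prd D A' B')" using pair_hom a b .
  have "cmp D (times D f g) (pair D a b) =
    pair D (cmp D (cmp D f (pr1 D A' B')) (pair D a b)) (cmp D (cmp D g (pr2 D A' B')) (pair D a b))"
    unfolding times_eq[OF f g]
    by (rule pair_comp[OF comp_hom[OF pr1_hom[OF ob] f] comp_hom[OF pr2_hom[OF ob] g] p])
  also have "\<dots> = pair D (cmp D f a) (cmp D g b)"
    using assoc[OF p pr1_hom[OF ob] f] assoc[OF p pr2_hom[OF ob] g] pr1_pair[OF a b] pr2_pair[OF a b]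
    by simp
  finally show ?thesis .
qed

lemma le_refl: "A \<in> Ob D \<Longrightarrow> x \<in> Pr D A \<Longrightarrow> le D A x x"
  using doc unfolding is_doctrine_def by blast
lemma le_trans: "A \<in> Ob D \<Longrightarrow> x \<in> Pr D A \<Longrightarrow> y \<in> Pr D A \<Longrightarrow> z \<in> Pr D A \<Longrightarrow>
  le D A x y \<Longrightarrow> le D A y z \<Longrightarrow> le D A x z"
  using doc unfolding is_doctrine_def by blast
lemma rdx_Pr: "f \<in> hom D A B \<Longrightarrow> x \<in> Pr D B \<Longrightarrow> rdx D f x \<in> Pr D A"
  using doc hom_ob unfolding is_doctrine_def by blast
lemma rdx_mono: "f \<in> hom D A B \<Longrightarrow> x \<in> Pr D B \<Longrightarrow> y \<in> Pr D B \<Longrightarrow> le D B x y \<Longrightarrow>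
  le D A (rdx D f x) (rdx D f y)"
  using doc hom_ob unfolding is_doctrine_def by blast
lemma rdx_id: "A \<in> Ob D \<Longrightarrow> x \<in> Pr D A \<Longrightarrow> rdx D (idt D A) x = x"
  using doc unfolding is_doctrine_def by blast
lemma rdx_comp: "f \<in> hom D A B \<Longrightarrow> g \<in> hom D B C \<Longrightarrow> x \<in> Pr D C \<Longrightarrow>
  rdx D (cmp D g f) x = rdx D f (rdx D g x)"
  using doc unfolding is_doctrine_def hom_def by auto

lemma ex1_Pr: "A \<in> Ob D \<Longrightarrow> B \<in> Ob D \<Longrightarrow> \<beta> \<in> Pr D (prd D A B) \<Longrightarrow> ex1 D A B \<beta> \<in> Pr D A"
  using exq unfolding existential_def by blast
lemma ex1_adj: "A \<in> Ob D \<Longrightarrow> B \<in> Ob D \<Longrightarrow> \<beta> \<in> Pr D (prd D A B) \<Longrightarrow> \<alpha> \<in> Pr D A \<Longrightarrow>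
  le D A (ex1 D A B \<beta>) \<alpha> \<longleftrightarrow> le D (prd D A B) \<beta> (rdx D (pr1 D A B) \<alpha>)"
  using exq unfolding existential_def by blast
lemma ex1_BC: "A \<in> Ob D \<Longrightarrow> B \<in> Ob D \<Longrightarrow> A' \<in> Ob D \<Longrightarrow> f \<in> hom D A' A \<Longrightarrow> \<beta> \<in> Pr D (prd D A B) \<Longrightarrow>
  ex1 D A' B (rdx D (times D f (idt D B)) \<beta>) = rdx D f (ex1 D A B \<beta>)"
  using exq unfolding existential_def by blast
lemma all1_Pr: "A \<in> Ob D \<Longrightarrow> B \<in> Ob D \<Longrightarrow> \<beta> \<in> Pr D (prd D A B) \<Longrightarrow> all1 D A B \<beta> \<in> Pr D A"
  using unq unfolding universal_def by blast
lemma all1_adj: "A \<in> Ob D \<Longrightarrow> B \<in> Ob D \<Longrightarrow> \<beta> \<in> Pr D (prd D A B) \<Longrightarrow> \<alpha> \<in> Pr D A \<Longrightarrow>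
  le D (prd D A B) (rdx D (pr1 D A B) \<alpha>) \<beta> \<longleftrightarrow> le D A \<alpha> (all1 D A B \<beta>)"
  using unq unfolding universal_def by blast
lemma all1_BC: "A \<in> Ob D \<Longrightarrow> B \<in> Ob D \<Longrightarrow> A' \<in> Ob D \<Longrightarrow> f \<in> hom D A' A \<Longrightarrow> \<beta> \<in> Pr D (prd D A B) \<Longrightarrow>
  all1 D A' B (rdx D (times D f (idt D B)) \<beta>) = rdx D f (all1 D A B \<beta>)"
  using unq unfolding universal_def by blast

lemma ex_free_Pr: "ex_free D I \<alpha> \<Longrightarrow> \<alpha> \<in> Pr D I"
  by (simp add: ex_free_def)

lemma ex_free_rdx:
  assumes e: "ex_free D I \<alpha>" and f: "f \<in> hom D J I"
  shows "ex_free D J (rdx D f \<alpha>)"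
  unfolding ex_free_def
proof (intro conjI ballI)
  show "rdx D f \<alpha> \<in> Pr D J" using rdx_Pr[OF f ex_free_Pr[OF e]] .
  fix A h assume A: "A \<in> Ob D" and h: "h \<in> hom D A J"
  have "rdx D h (rdx D f \<alpha>) = rdx D (cmp D f h) \<alpha>"
    using rdx_comp[OF h f ex_free_Pr[OF e]] by simp
  moreover have "ex_splitting D A (rdx D (cmp D f h) \<alpha>)"
    using e A comp_hom[OF h f] unfolding ex_free_def by blast
  ultimately show "ex_splitting D A (rdx D h (rdx D f \<alpha>))" by simp
qed

lemma ex_free_split: "ex_free D I \<alpha> \<Longrightarrow> I \<in> Ob D \<Longrightarrow> ex_splitting D I \<alpha>"
  using rdx_id id_hom unfolding ex_free_def by metis

end

theorem theorem2:
  fixes D :: "('o, 'a, 'p) doctrine"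
  assumes "godel_doctrine D"
    and "I \<in> Ob D" "U \<in> Ob D" "X \<in> Ob D" "V \<in> Ob D" "Y \<in> Ob D"
    and "quant_free D (prd D (prd D I U) X) \<psi>"
    and "quant_free D (prd D (prd D I V) Y) \<phi>"
  shows "le D I (ex1 D I U (all1 D (prd D I U) X \<psi>)) (ex1 D I V (all1 D (prd D I V) Y \<phi>))
     \<longleftrightarrow> (\<exists>f0\<in>hom D (prd D I U) V. \<exists>f1\<in>hom D (prd D (prd D I U) Y) X.
           le D (prd D (prd D I U) Y)
             (rdx D (pair D (pr1 D (prd D I U) Y) f1) \<psi>)
             (rdx D (pair D (pair D (cmp D (pr1 D I U) (pr1 D (prd D I U) Y))
                                    (cmp D f0 (pr1 D (prd D I U) Y)))
                            (pr2 D (prd D I U) Y)) \<phi>))"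
proof -
  interpret gd D using assms(1) by unfold_locales (simp_all add: godel_doctrine_def)
  define IU where "IU = prd D I U"
  define IV where "IV = prd D I V"
  define IUY where "IUY = prd D IU Y"
  define p where "p = pr1 D I U"
  define q where "q = pr1 D IU Y"
  define r where "r = pr2 D IU Y"
  define A where "A = all1 D IU X \<psi>"
  define \<beta> where "\<beta> = all1 D IV Y \<phi>"
  define E where "E = ex1 D I V \<beta>"
  have I: "I \<in> Ob D" and U: "U \<in> Ob D" and X: "X \<in> Ob D" and V: "V \<in> Ob D" and Y: "Y \<in> Ob D"
    using assms by auto
  have IU: "IU \<in> Ob D" using prd_ob I U IU_def by simp
  have IV: "IV \<in> Ob D" using prd_ob I V IV_def by simp
  have IUY: "IUY \<in> Ob D" using prd_ob IU Y IUY_def by simp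
  have p: "p \<in> hom D IU I" using pr1_hom[OF I U] p_def IU_def by simp
  have q: "q \<in> hom D IUY IU" using pr1_hom[OF IU Y] q_def IUY_def by simp
  have r: "r \<in> hom D IUY Y" using pr2_hom[OF IU Y] r_def IUY_def by simp
  have psiF: "ex_free D (prd D IU X) \<psi>" using assms(7) IU_def by (simp add: quant_free_def)
  have phiU: "univ_free' D (prd D IV Y) \<phi>" using assms(8) IV_def by (simp add: quant_free_def)
  have psiP: "\<psi> \<in> Pr D (prd D IU X)" using ex_free_Pr[OF psiF] .
  have phiP: "\<phi> \<in> Pr D (prd D IV Y)" using phiU ex_free_Pr unfolding univ_free'_def by blast
  have AP: "A \<in> Pr D IU" using all1_Pr[OF IU X psiP] A_def by simp
  have \<beta>P: "\<beta> \<in> Pr D IV" using all1_Pr[OF IV Y phiP] \<beta>_def by simp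
  have EP: "E \<in> Pr D I" using ex1_Pr[OF I V] \<beta>P E_def IV_def by simp
  have pIV: "pr1 D I V \<in> hom D IV I" using pr1_hom[OF I V] IV_def by simp
  have AF: "ex_free D IU A" using fpe psiF IU X A_def unfolding forall_preserves_ex_free_def by blast
  have key0: "rdx D (pair D p f0) \<beta> = all1 D IU Y (rdx D (pair D (pair D (cmp D p q) (cmp D f0 q)) r) \<phi>)
     \<and> rdx D (pair D (pair D (cmp D p q) (cmp D f0 q)) r) \<phi> \<in> Pr D IUY
     \<and> pair D (pair D (cmp D p q) (cmp D f0 q)) r \<in> hom D IUY (prd D IV Y)
     \<and> le D IU (rdx D (pair D p f0) \<beta>) (rdx D p E)
     \<and> rdx D (pair D p f0) \<beta> \<in> Pr D IU"
    if f0: "f0 \<in> hom D IU V" for f0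
  proof -
    have k: "pair D p f0 \<in> hom D IU IV" using pair_hom[OF p f0] IV_def by simp
    have H: "times D (pair D p f0) (idt D Y) = pair D (pair D (cmp D p q) (cmp D f0 q)) r"
      using times_eq[OF k id_hom[OF Y]] pair_comp[OF p f0 q] comp_id_l[OF r] q_def r_def IUY_def
      by simp
    have Hh: "times D (pair D p f0) (idt D Y) \<in> hom D IUY (prd D IV Y)"
      using times_hom[OF k id_hom[OF Y]] IUY_def by simp
    have 1: "rdx D (pair D p f0) \<beta> = all1 D IU Y (rdx D (pair D (pair D (cmp D p q) (cmp D f0 q)) r) \<phi>)"
      using all1_BC[OF IV Y IU k phiP] H \<beta>_def by simp
    have kP: "rdx D (pair D p f0) \<beta> \<in> Pr D IU" using rdx_Pr[OF k \<beta>P] .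
    have u: "le D IV \<beta> (rdx D (pr1 D I V) E)"
      using ex1_adj[OF I V, of \<beta> E] \<beta>P EP le_refl[OF I EP] IV_def E_def by simp
    have "le D IU (rdx D (pair D p f0) \<beta>) (rdx D (pair D p f0) (rdx D (pr1 D I V) E))"
      using rdx_mono[OF k \<beta>P rdx_Pr[OF pIV EP] u] .
    moreover have "rdx D (pair D p f0) (rdx D (pr1 D I V) E) = rdx D p E"
      using rdx_comp[OF k pIV EP] pr1_pair[OF p f0] IV_def by simp
    ultimately show ?thesis using 1 H Hh kP rdx_Pr[OF Hh phiP] by simp
  qed
  have key1: "all1 D IUY X (rdx D (times D q (idt D X)) \<psi>) = rdx D q A
     \<and> rdx D (pair D (idt D IUY) f1) (rdx D (times D q (idt D X)) \<psi>) = rdx D (pair D q f1) \<psi>"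
    if f1: "f1 \<in> hom D IUY X" for f1
  proof -
    have t: "times D q (idt D X) \<in> hom D (prd D IUY X) (prd D IU X)" using times_hom[OF q id_hom[OF X]] .
    have pi: "pair D (idt D IUY) f1 \<in> hom D IUY (prd D IUY X)" using pair_hom[OF id_hom[OF IUY] f1] .
    have "rdx D (pair D (idt D IUY) f1) (rdx D (times D q (idt D X)) \<psi>)
        = rdx D (cmp D (times D q (idt D X)) (pair D (idt D IUY) f1)) \<psi>"
      using rdx_comp[OF pi t psiP] by simp
    also have "\<dots> = rdx D (pair D q f1) \<psi>"
      using times_pair[OF q id_hom[OF X] id_hom[OF IUY] f1] comp_id_r[OF q] comp_id_l[OF f1] by simp
    finally show ?thesis using all1_BC[OF IU X IUY q psiP] A_def by simp
  qed
  have goal: "le D I (ex1 D I U A) E \<longleftrightarrow> (\<exists>f0\<in>hom D IU V. \<exists>f1\<in>hom D IUY X.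
      le D IUY (rdx D (pair D q f1) \<psi>) (rdx D (pair D (pair D (cmp D p q) (cmp D f0 q)) r) \<phi>))"
  proof
    assume h: "le D I (ex1 D I U A) E"
    have h1: "le D IU A (rdx D p E)" using ex1_adj[OF I U, of A E] AP EP h IU_def p_def by simp
    have t: "times D p (idt D V) \<in> hom D (prd D IU V) IV" using times_hom[OF p id_hom[OF V]] IV_def by simp
    have \<beta>'P: "rdx D (times D p (idt D V)) \<beta> \<in> Pr D (prd D IU V)" using rdx_Pr[OF t \<beta>P] .
    have "rdx D p E = ex1 D IU V (rdx D (times D p (idt D V)) \<beta>)"
      using ex1_BC[OF I V IU p] \<beta>P IV_def E_def by simp
    with h1 have "le D IU A (ex1 D IU V (rdx D (times D p (idt D V)) \<beta>))" by simp
    then obtain g where g: "g \<in> hom D IU V"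
      and gl: "le D IU A (rdx D (pair D (idt D IU) g) (rdx D (times D p (idt D V)) \<beta>))"
      using ex_free_split[OF AF IU] V \<beta>'P unfolding ex_splitting_def by blast
    have pi: "pair D (idt D IU) g \<in> hom D IU (prd D IU V)" using pair_hom[OF id_hom[OF IU] g] .
    have "rdx D (pair D (idt D IU) g) (rdx D (times D p (idt D V)) \<beta>)
        = rdx D (cmp D (times D p (idt D V)) (pair D (idt D IU) g)) \<beta>"
      using rdx_comp[OF pi t \<beta>P] by simp
    also have "\<dots> = rdx D (pair D p g) \<beta>"
      using times_pair[OF p id_hom[OF V] id_hom[OF IU] g] comp_id_r[OF p] comp_id_l[OF g] by simp
    finally have gl2: "le D IU A (all1 D IU Y (rdx D (pair D (pair D (cmp D p q) (cmp D g q)) r) \<phi>))"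
      using gl key0[OF g] by simp
    define \<phi>' where "\<phi>' = rdx D (pair D (pair D (cmp D p q) (cmp D g q)) r) \<phi>"
    have \<phi>'P: "\<phi>' \<in> Pr D IUY" using key0[OF g] \<phi>'_def by simp
    have gl3: "le D IUY (rdx D q A) \<phi>'"
      using all1_adj[OF IU Y, of \<phi>' A] gl2 \<phi>'P AP IUY_def q_def \<phi>'_def by simp
    have tq: "times D q (idt D X) \<in> hom D (prd D IUY X) (prd D IU X)" using times_hom[OF q id_hom[OF X]] .
    have psF: "ex_free D (prd D IUY X) (rdx D (times D q (idt D X)) \<psi>)"
      using ex_free_rdx[OF psiF tq] .
    have us: "univ_splitting' D IUY \<phi>'"
      using phiU key0[OF g] \<phi>'_def IUY unfolding univ_free'_def by blast
    have all1eq: "all1 D IUY X (rdx D (times D q (idt D X)) \<psi>) = rdx D q A"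
      using all1_BC[OF IU X IUY q psiP] A_def by simp
    obtain f1 where f1: "f1 \<in> hom D IUY X"
      and fl: "le D IUY (rdx D (pair D (idt D IUY) f1) (rdx D (times D q (idt D X)) \<psi>)) \<phi>'"
      using us X psF gl3 all1eq unfolding univ_splitting'_def by metis
    show "\<exists>f0\<in>hom D IU V. \<exists>f1\<in>hom D IUY X.
      le D IUY (rdx D (pair D q f1) \<psi>) (rdx D (pair D (pair D (cmp D p q) (cmp D f0 q)) r) \<phi>)"
      using g f1 fl key1[OF f1] \<phi>'_def by metis
  next
    assume "\<exists>f0\<in>hom D IU V. \<exists>f1\<in>hom D IUY X.
      le D IUY (rdx D (pair D q f1) \<psi>) (rdx D (pair D (pair D (cmp D p q) (cmp D f0 q)) r) \<phi>)"
    then obtain f0 f1 where f0: "f0 \<in> hom D IU V" and f1: "f1 \<in> hom D IUY X"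
      and hl: "le D IUY (rdx D (pair D q f1) \<psi>) (rdx D (pair D (pair D (cmp D p q) (cmp D f0 q)) r) \<phi>)"
      by blast
    define \<phi>' where "\<phi>' = rdx D (pair D (pair D (cmp D p q) (cmp D f0 q)) r) \<phi>"
    have \<phi>'P: "\<phi>' \<in> Pr D IUY" using key0[OF f0] \<phi>'_def by simp
    define \<psi>'' where "\<psi>'' = rdx D (times D q (idt D X)) \<psi>"
    have tq: "times D q (idt D X) \<in> hom D (prd D IUY X) (prd D IU X)" using times_hom[OF q id_hom[OF X]] .
    have \<psi>''P: "\<psi>'' \<in> Pr D (prd D IUY X)" using rdx_Pr[OF tq psiP] \<psi>''_def by simp
    have pi: "pair D (idt D IUY) f1 \<in> hom D IUY (prd D IUY X)" using pair_hom[OF id_hom[OF IUY] f1] .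
    have pX: "pr1 D IUY X \<in> hom D (prd D IUY X) IUY" using pr1_hom[OF IUY X] .
    have aP: "all1 D IUY X \<psi>'' \<in> Pr D IUY" using all1_Pr[OF IUY X \<psi>''P] .
    have cu: "le D (prd D IUY X) (rdx D (pr1 D IUY X) (all1 D IUY X \<psi>'')) \<psi>''"
      using all1_adj[OF IUY X \<psi>''P aP] le_refl[OF IUY aP] by simp
    have c2: "le D IUY (rdx D (pair D (idt D IUY) f1) (rdx D (pr1 D IUY X) (all1 D IUY X \<psi>'')))
       (rdx D (pair D (idt D IUY) f1) \<psi>'')"
      using rdx_mono[OF pi rdx_Pr[OF pX aP] \<psi>''P cu] .
    have "rdx D (pair D (idt D IUY) f1) (rdx D (pr1 D IUY X) (all1 D IUY X \<psi>''))
       = all1 D IUY X \<psi>''"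
      using rdx_comp[OF pi pX aP] pr1_pair[OF id_hom[OF IUY] f1] rdx_id[OF IUY aP] by simp
    with c2 key1[OF f1] have c3: "le D IUY (rdx D q A) (rdx D (pair D q f1) \<psi>)"
      using \<psi>''_def by simp
    have qAP: "rdx D q A \<in> Pr D IUY" using rdx_Pr[OF q AP] .
    have pqP: "rdx D (pair D q f1) \<psi> \<in> Pr D IUY" using rdx_Pr[OF pair_hom[OF q f1] psiP] .
    have c4: "le D IUY (rdx D q A) \<phi>'"
      using le_trans[OF IUY qAP pqP \<phi>'P c3] hl \<phi>'_def by simp
    have c5: "le D IU A (rdx D (pair D p f0) \<beta>)"
      using all1_adj[OF IU Y, of \<phi>' A] c4 \<phi>'P AP IUY_def q_def \<phi>'_def key0[OF f0] by simp
    have c6: "le D IU A (rdx D p E)"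
      using le_trans[OF IU AP _ rdx_Pr[OF p EP] c5] key0[OF f0] by blast
    show "le D I (ex1 D I U A) E" using ex1_adj[OF I U, of A E] AP EP c6 IU_def p_def by simp
  qed
  then show ?thesis
    unfolding IU_def IV_def IUY_def p_def q_def r_def A_def \<beta>_def E_def .
qed

end
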